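(* In the standing setting, for every $A'\in Q'$ we have $g'(A')=\bigcup_{a'\in A'}\downarrow f^{-1}(a')$, where $\downarrow f^{-1}(a')=\{b\in P:\ \exists a\in f^{-1}(a') \text{ with } b\preceq a\}$.
   Context: Standing setting: $(P,\preceq)$ is a finite poset with a bottom and a top element; $f:P\to P'$ is a surjective map onto $P'=f(P)$; $f^{-1}(a')=\{a\in P: f(a)=a'\}$; the relation $\preceq'$ on $P'$ is defined by $b'\preceq' a'$ iff there exist $a\in f^{-1}(a')$, $b\in f^{-1}(b')$ with $b\preceq a$. Assume the three conditions: (D) for all $a',b'\in P'$ with $b'\preceq' a'$ and every $a\in f^{-1}(a')$ there is $b\in f^{-1}(b')$ with $b\preceq a$; (U) for all $a',b'\in P'$ with $b'\preceq' a'$ and every $b\in f^{-1}(b')$ there is $a\in f^{-1}(a')$ with $b\preceq a$; (S) for all $a,b,c\in P$, if $c\preceq b\preceq a$ and $f(c)=f(a)$ then $f(b)=f(a)$. (Then $(P',\preceq')$ is a poset.) A down-set of a poset is a subset $A$ such that $a\in A$ and $b\preceq a$ imply $b\in A$. $Q$ is the set of nonempty down-sets of $(P,\preceq)$ and $Q'$ the set of nonempty down-sets of $(P',\preceq')$, each ordered by inclusion. $g:2^P\to 2^{P'}$ is $g(A)=\{f(a):a\in A\}$. For $A'\in Q'$, $g^{-1}(A')=\{A\in Q: g(A)=A'\}$ and $g'(A')=\bigcup_{A\in g^{-1}(A')}A$. *)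

theory Defs
  imports Main
begin

definition finite_bounded_poset :: "'a set \<Rightarrow> ('a \<Rightarrow> 'a \<Rightarrow> bool) \<Rightarrow> bool" where
  "finite_bounded_poset P le \<longleftrightarrow>
     finite P \<and>
     (\<forall>a\<in>P. le a a) \<and>
     (\<forall>a\<in>P. \<forall>b\<in>P. le a b \<and> le b a \<longrightarrow> a = b) \<and>
     (\<forall>a\<in>P. \<forall>b\<in>P. \<forall>c\<in>P. le a b \<and> le b c \<longrightarrow> le a c) \<and>
     (\<exists>bot\<in>P. \<forall>a\<in>P. le bot a) \<and>
     (\<exists>top\<in>P. \<forall>a\<in>P. le a top)"

definition fib :: "'a set \<Rightarrow> ('a \<Rightarrow> 'b) \<Rightarrow> 'b \<Rightarrow> 'a set" where
  "fib P f a' = {a\<in>P. f a = a'}"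

definition induced_le :: "'a set \<Rightarrow> ('a \<Rightarrow> 'a \<Rightarrow> bool) \<Rightarrow> ('a \<Rightarrow> 'b) \<Rightarrow> 'b \<Rightarrow> 'b \<Rightarrow> bool" where
  "induced_le P le f b' a' \<longleftrightarrow> (\<exists>a\<in>fib P f a'. \<exists>b\<in>fib P f b'. le b a)"

definition cond_D :: "'a set \<Rightarrow> ('a \<Rightarrow> 'a \<Rightarrow> bool) \<Rightarrow> ('a \<Rightarrow> 'b) \<Rightarrow> bool" where
  "cond_D P le f \<longleftrightarrow> (\<forall>a'\<in>f ` P. \<forall>b'\<in>f ` P. induced_le P le f b' a' \<longrightarrow>
      (\<forall>a\<in>fib P f a'. \<exists>b\<in>fib P f b'. le b a))"

definition cond_U :: "'a set \<Rightarrow> ('a \<Rightarrow> 'a \<Rightarrow> bool) \<Rightarrow> ('a \<Rightarrow> 'b) \<Rightarrow> bool" where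
  "cond_U P le f \<longleftrightarrow> (\<forall>a'\<in>f ` P. \<forall>b'\<in>f ` P. induced_le P le f b' a' \<longrightarrow>
      (\<forall>b\<in>fib P f b'. \<exists>a\<in>fib P f a'. le b a))"

definition cond_S :: "'a set \<Rightarrow> ('a \<Rightarrow> 'a \<Rightarrow> bool) \<Rightarrow> ('a \<Rightarrow> 'b) \<Rightarrow> bool" where
  "cond_S P le f \<longleftrightarrow> (\<forall>a\<in>P. \<forall>b\<in>P. \<forall>c\<in>P. le c b \<and> le b a \<and> f c = f a \<longrightarrow> f b = f a)"

definition down_set :: "'a set \<Rightarrow> ('a \<Rightarrow> 'a \<Rightarrow> bool) \<Rightarrow> 'a set \<Rightarrow> bool" where
  "down_set X r A \<longleftrightarrow> A \<subseteq> X \<and> (\<forall>a\<in>A. \<forall>b\<in>X. r b a \<longrightarrow> b \<in> A)"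

definition nonempty_down_sets :: "'a set \<Rightarrow> ('a \<Rightarrow> 'a \<Rightarrow> bool) \<Rightarrow> 'a set set" where
  "nonempty_down_sets X r = {A. down_set X r A \<and> A \<noteq> {}}"

definition g_map :: "('a \<Rightarrow> 'b) \<Rightarrow> 'a set \<Rightarrow> 'b set" where
  "g_map f A = f ` A"

definition g_inv :: "'a set \<Rightarrow> ('a \<Rightarrow> 'a \<Rightarrow> bool) \<Rightarrow> ('a \<Rightarrow> 'b) \<Rightarrow> 'b set \<Rightarrow> 'a set set" where
  "g_inv P le f A' = {A\<in>nonempty_down_sets P le. g_map f A = A'}"

definition g' :: "'a set \<Rightarrow> ('a \<Rightarrow> 'a \<Rightarrow> bool) \<Rightarrow> ('a \<Rightarrow> 'b) \<Rightarrow> 'b set \<Rightarrow> 'a set" where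
  "g' P le f A' = \<Union> (g_inv P le f A')"

definition down_closure :: "'a set \<Rightarrow> ('a \<Rightarrow> 'a \<Rightarrow> bool) \<Rightarrow> 'a set \<Rightarrow> 'a set" where
  "down_closure P le S = {b\<in>P. \<exists>a\<in>S. le b a}"

end

theory Submission
  imports Defs
begin

theorem lemma14:
  fixes P :: "'a set" and le :: "'a \<Rightarrow> 'a \<Rightarrow> bool" and f :: "'a \<Rightarrow> 'b"
  assumes "finite_bounded_poset P le"
    and "cond_D P le f" and "cond_U P le f" and "cond_S P le f"
    and "A' \<in> nonempty_down_sets (f ` P) (induced_le P le f)"
  shows "g' P le f A' = (\<Union>a'\<in>A'. down_closure P le (fib P f a'))"
proof -
  define D where "D = (\<Union>a'\<in>A'. down_closure P le (fib P f a'))"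
  have refl: "\<And>a. a \<in> P \<Longrightarrow> le a a" and trans: "\<And>a b c. a \<in> P \<Longrightarrow> b \<in> P \<Longrightarrow> c \<in> P \<Longrightarrow> le a b \<Longrightarrow> le b c \<Longrightarrow> le a c"
    using assms(1) unfolding finite_bounded_poset_def by blast+
  have A'sub: "A' \<subseteq> f ` P" and A'ne: "A' \<noteq> {}"
    and A'down: "\<And>a' b'. a' \<in> A' \<Longrightarrow> b' \<in> f ` P \<Longrightarrow> induced_le P le f b' a' \<Longrightarrow> b' \<in> A'"
    using assms(5) unfolding nonempty_down_sets_def down_set_def by blast+
  have Dmem: "b \<in> D \<longleftrightarrow> b \<in> P \<and> (\<exists>a\<in>P. f a \<in> A' \<and> le b a)" for b
    unfolding D_def down_closure_def fib_def by blast
  have DP: "D \<subseteq> P" using Dmem by blast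
  have Ddown: "down_set P le D"
    unfolding down_set_def using DP Dmem trans by meson
  have Dne: "D \<noteq> {}"
  proof -
    obtain a' where "a' \<in> A'" using A'ne by blast
    then obtain a where "a \<in> P" "f a = a'" using A'sub by blast
    then have "a \<in> D" using Dmem refl \<open>a' \<in> A'\<close> by blast
    then show ?thesis by blast
  qed
  have fD: "f ` D = A'"
  proof
    show "f ` D \<subseteq> A'"
    proof
      fix x assume "x \<in> f ` D"
      then obtain b a where b: "b \<in> P" "a \<in> P" "f a \<in> A'" "le b a" "x = f b" using Dmem by blast
      have "induced_le P le f (f b) (f a)" unfolding induced_le_def fib_def using b by blast
      then show "x \<in> A'" using A'down b by blast
    qed
  next
    show "A' \<subseteq> f ` D"
    proof
      fix a' assume "a' \<in> A'"
      then obtain a where "a \<in> P" "f a = a'" using A'sub by blast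
      then have "a \<in> D" using Dmem refl \<open>a' \<in> A'\<close> by blast
      then show "a' \<in> f ` D" using \<open>f a = a'\<close> by blast
    qed
  qed
  have Dinv: "D \<in> g_inv P le f A'"
    unfolding g_inv_def nonempty_down_sets_def g_map_def using Ddown Dne fD by blast
  have "\<And>A. A \<in> g_inv P le f A' \<Longrightarrow> A \<subseteq> D"
  proof
    fix A a assume A: "A \<in> g_inv P le f A'" and a: "a \<in> A"
    have "A \<subseteq> P" "f ` A = A'" using A unfolding g_inv_def nonempty_down_sets_def down_set_def g_map_def by blast+
    then show "a \<in> D" using a Dmem refl by blast
  qed
  then have "g' P le f A' = D" unfolding g'_def using Dinv by blast
  then show ?thesis unfolding D_def .
qed

end
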